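(* Let $\mathcal A$ be a linear time-invariant algorithm with $n$ oracles, state-space realization $(A,B,C,D)$ and transfer function $\hat H(z)$ with entries $h_{ij}(z)$, $1\le i,j\le n$. (a) Suppose $D_{kk}\ne0$ for some $k\in[n]$. Then the transfer function $\hat H'(z)$ of $\mathcal C_k\mathcal A$ has entries $$h'_{ij}(z)=\begin{cases}1/h_{kk}(z)& i=k,\ j=k,\\ -h_{kj}(z)/h_{kk}(z)& i=k,\ j\ne k,\\ h_{ik}(z)/h_{kk}(z)& i\ne k,\ j=k,\\ h_{ij}(z)-h_{ik}(z)h_{kj}(z)/h_{kk}(z)& i\ne k,\ j\ne k.\end{cases}$$ (b) Suppose $D$ is invertible. Then the transfer function $\hat H'(z)$ of $\mathcal C_{[n]}\mathcal A$ satisfies $\hat H'(z)=\hat H^{-1}(z)$.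
   Context: A linear time-invariant algorithm with realization $(A,B,C,D)$ generates $x^{k+1}=Ax^k+Bu^k$, $y^k=Cx^k+Du^k$, $u^k=\phi(y^k)$, where the $n$ oracles are (sub)gradients $\partial f_i$ of convex functions; its transfer function is $\hat H(z)=C(zI-A)^{-1}B+D$. For $\kappa\subseteq[n]=\{1,\dots,n\}$, the conjugation $\mathcal C_\kappa\mathcal A$ is obtained by rewriting $\mathcal A$ to call $\partial f_i^\star=(\partial f_i)^{-1}$ ($f^\star$ the Fenchel conjugate) instead of $\partial f_i$ for each $i\in\kappa$, which swaps the oracle argument and output for those oracles; $\mathcal C_k=\mathcal C_{\{k\}}$. *)

theory Defs
  imports "HOL-Analysis.Analysis"
begin

text \<open>A state-space realization (A,B,C,D) of an LTI algorithm with state index type 's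
  and oracle index type 'i (one scalar oracle per index i).\<close>
type_synonym ('s, 'i) realization =
  "(real^'s^'s) \<times> (real^'i^'s) \<times> (real^'s^'i) \<times> (real^'i^'i)"

definition lti_traj :: "('s::finite, 'i::finite) realization \<Rightarrow>
    (nat \<Rightarrow> real^'s) \<Rightarrow> (nat \<Rightarrow> real^'i) \<Rightarrow> (nat \<Rightarrow> real^'i) \<Rightarrow> bool" where
  "lti_traj R x u y \<longleftrightarrow> (case R of (A, B, C, D) \<Rightarrow>
     (\<forall>t. x (Suc t) = A *v x t + B *v u t \<and> y t = C *v x t + D *v u t))"

text \<open>Conjugating the oracles in \<kappa> swaps oracle argument and output for those oracles:
  the new oracle output is the old argument y_i, the new oracle argument is the old output u_i.\<close>
definition conj_in :: "'i set \<Rightarrow> real^'i \<Rightarrow> real^'i \<Rightarrow> real^'i" where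
  "conj_in \<kappa> u y = (\<chi> i. if i \<in> \<kappa> then y $ i else u $ i)"

definition conj_out :: "'i set \<Rightarrow> real^'i \<Rightarrow> real^'i \<Rightarrow> real^'i" where
  "conj_out \<kappa> u y = (\<chi> i. if i \<in> \<kappa> then u $ i else y $ i)"

text \<open>R' is a realization of the conjugated algorithm C_\<kappa> A: R' generates exactly the
  iterates of R, with oracle arguments and outputs swapped for the oracles in \<kappa>.\<close>
definition is_conjugation :: "'i set \<Rightarrow> ('s::finite, 'i::finite) realization \<Rightarrow>
    ('s, 'i) realization \<Rightarrow> bool" where
  "is_conjugation \<kappa> R R' \<longleftrightarrow>
     (\<forall>x u y. lti_traj R x u y \<longleftrightarrow>
        lti_traj R' x (\<lambda>t. conj_in \<kappa> (u t) (y t)) (\<lambda>t. conj_out \<kappa> (u t) (y t)))"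

definition cmat :: "real^'n^'m \<Rightarrow> complex^'n^'m" where
  "cmat M = (\<chi> i j. complex_of_real (M $ i $ j))"

definition resolvent_ok :: "('s::finite, 'i::finite) realization \<Rightarrow> complex \<Rightarrow> bool" where
  "resolvent_ok R z \<longleftrightarrow> (case R of (A, B, C, D) \<Rightarrow> invertible (mat z - cmat A))"

definition transfer :: "('s::finite, 'i::finite) realization \<Rightarrow> complex \<Rightarrow> complex^'i^'i" where
  "transfer R z = (case R of (A, B, C, D) \<Rightarrow>
     cmat C ** matrix_inv (mat z - cmat A) ** cmat B + cmat D)"

definition Dmat :: "('s, 'i) realization \<Rightarrow> real^'i^'i" where
  "Dmat R = snd (snd (snd R))"

end

theory Submission
  imports Defs
begin

definition Pm :: "'i set \<Rightarrow> 'a::semiring_1^'i^'i" where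
  "Pm K = (\<chi> i j. if i = j \<and> i \<in> K then 1 else 0)"
definition Qm :: "'i set \<Rightarrow> 'a::semiring_1^'i^'i" where
  "Qm K = (\<chi> i j. if i = j \<and> i \<notin> K then 1 else 0)"

lemma Pm_v: "(Pm K *v v) $ i = (if i \<in> K then v $ i else 0)"
  by (simp add: Pm_def matrix_vector_mult_def if_distrib if_distribR sum.delta cong: if_cong)
lemma Qm_v: "(Qm K *v v) $ i = (if i \<in> K then 0 else v $ i)"
  by (simp add: Qm_def matrix_vector_mult_def if_distrib if_distribR sum.delta cong: if_cong)

lemma PP: "Pm K *v (Pm K *v v) = Pm K *v v" by (simp add: vec_eq_iff Pm_v)
lemma QQ: "Qm K *v (Qm K *v v) = Qm K *v v" by (simp add: vec_eq_iff Qm_v)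
lemma PQ: "Pm K *v (Qm K *v v) = 0" by (simp add: vec_eq_iff Pm_v Qm_v)
lemma QP: "Qm K *v (Pm K *v v) = 0" by (simp add: vec_eq_iff Pm_v Qm_v)
lemma PQsum: "Pm K *v v + Qm K *v v = v" by (simp add: vec_eq_iff Pm_v Qm_v)

lemma conj_in_PQ: "conj_in K u y = Qm K *v u + Pm K *v y"
  by (simp add: vec_eq_iff conj_in_def Pm_v Qm_v)
lemma conj_out_PQ: "conj_out K u y = Pm K *v u + Qm K *v y"
  by (simp add: vec_eq_iff conj_out_def Pm_v Qm_v)

lemma inv_props:
  fixes M :: "'a::field^'n^'n"
  assumes "invertible M"
  shows "M ** matrix_inv M = mat 1" "matrix_inv M ** M = mat 1"
  using someI_ex[OF assms[unfolded invertible_def]] unfolding matrix_inv_def by auto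

lemma inv_unique:
  fixes M N :: "'a::field^'n^'n"
  assumes "M ** N = mat 1"
  shows "matrix_inv M = N"
proof -
  have NM: "N ** M = mat 1" using assms matrix_left_right_inverse by blast
  hence inv: "invertible M" using assms invertible_def by blast
  have "matrix_inv M = matrix_inv M ** (M ** N)" using assms by simp
  also have "\<dots> = N" by (simp add: matrix_mul_assoc inv_props(2)[OF inv])
  finally show ?thesis .
qed

lemma pointwise:
  fixes A :: "real^'s^'s" and B :: "real^'i^'s" and C :: "real^'s^'i" and D :: "real^'i^'i" and K :: "'i set"
  defines "P \<equiv> Pm K :: real^'i^'i" and "Q \<equiv> Qm K :: real^'i^'i"
  defines "T \<equiv> Q + P ** D"
  assumes invT: "invertible T"
  defines "Ti \<equiv> matrix_inv T"
  shows "(x1 = A *v x + B *v u \<and> y = C *v x + D *v u) \<longleftrightarrow>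
    (x1 = (A - B ** Ti ** P ** C) *v x + (B ** Ti) *v (Q *v u + P *v y) \<and>
     P *v u + Q *v y = (Q ** C - (P + Q ** D) ** Ti ** P ** C) *v x + ((P + Q ** D) ** Ti) *v (Q *v u + P *v y))"
    (is "?L \<longleftrightarrow> ?R")
proof -
  have TiT: "Ti *v (T *v v) = v" for v
    using inv_props(2)[OF invT] by (simp add: Ti_def matrix_vector_mul_assoc)
  have TTi: "T *v (Ti *v v) = v" for v
    using inv_props(1)[OF invT] by (simp add: Ti_def matrix_vector_mul_assoc)
  note simps = matrix_vector_mult_add_rdistrib matrix_vector_right_distrib
     matrix_vector_mult_diff_distrib matrix_vector_mult_diff_rdistrib
     matrix_vector_mul_assoc[symmetric]
  define w where "w = Ti *v (Q *v u + P *v y - P *v (C *v x))"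
  have R_iff: "?R \<longleftrightarrow> (x1 = A *v x + B *v w \<and> P *v u + Q *v y = Q *v (C *v x) + P *v w + Q *v (D *v w))"
    unfolding w_def by (simp add: simps algebra_simps)
  show ?thesis
  proof
    assume L: ?L
    have "Q *v u + P *v y - P *v (C *v x) = T *v u"
      using L by (simp add: T_def simps algebra_simps)
    hence "w = u" by (simp add: w_def TiT)
    thus ?R unfolding R_iff using L by (simp add: simps algebra_simps P_def Q_def PP QQ PQ QP PQsum)
  next
    assume R: ?R
    hence x1: "x1 = A *v x + B *v w" and y': "P *v u + Q *v y = Q *v (C *v x) + P *v w + Q *v (D *v w)"
      using R_iff by auto
    have Pu: "P *v u = P *v w"
      using arg_cong[OF y', of "\<lambda>v. P *v v"] by (simp add: simps P_def Q_def PP QQ PQ QP)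
    have Qy: "Q *v y = Q *v (C *v x) + Q *v (D *v w)"
      using arg_cong[OF y', of "\<lambda>v. Q *v v"] by (simp add: simps P_def Q_def PP QQ PQ QP)
    have Tw: "T *v w = Q *v u + P *v y - P *v (C *v x)" by (simp add: w_def TTi)
    hence Tw': "Q *v w + P *v (D *v w) = Q *v u + P *v y - P *v (C *v x)"
      by (simp add: T_def simps)
    have Qw: "Q *v w = Q *v u"
      using arg_cong[OF Tw', of "\<lambda>v. Q *v v"] by (simp add: simps P_def Q_def PP QQ PQ QP)
    have Py: "P *v y = P *v (C *v x) + P *v (D *v w)"
      using arg_cong[OF Tw', of "\<lambda>v. P *v v"] by (simp add: simps P_def Q_def PP QQ PQ QP)
    have wu: "w = u" using Pu Qw PQsum[of K w] PQsum[of K u] by (simp add: P_def Q_def)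
    have "y = P *v y + Q *v y" using PQsum[of K y] by (simp add: P_def Q_def)
    also have "\<dots> = P *v (C *v x + D *v u) + Q *v (C *v x + D *v u)"
      using Py Qy wu by (simp add: simps)
    also have "\<dots> = C *v x + D *v u" using PQsum by (simp add: P_def Q_def)
    finally show ?L using x1 wu by simp
  qed
qed


lemma conj_invol:
  "conj_in K (conj_in K a b) (conj_out K a b) = a"
  "conj_out K (conj_in K a b) (conj_out K a b) = b"
  by (simp_all add: vec_eq_iff conj_in_def conj_out_def)

lemma exists_conj:
  fixes A :: "real^'s::finite^'s" and B :: "real^'i::finite^'s" and C :: "real^'s^'i" and D :: "real^'i^'i" and K :: "'i set"
  assumes invT: "invertible (Qm K + Pm K ** D)"
  shows "\<exists>R'. is_conjugation K (A, B, C, D) R'"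
proof -
  let ?P = "Pm K :: real^'i^'i" and ?Q = "Qm K :: real^'i^'i"
  let ?Ti = "matrix_inv (?Q + ?P ** D)"
  let ?R' = "(A - B ** ?Ti ** ?P ** C, B ** ?Ti, ?Q ** C - (?P + ?Q ** D) ** ?Ti ** ?P ** C, (?P + ?Q ** D) ** ?Ti)"
  have "is_conjugation K (A, B, C, D) ?R'"
    unfolding is_conjugation_def lti_traj_def conj_in_PQ conj_out_PQ prod.case
  proof (intro allI)
    fix x :: "nat \<Rightarrow> real^'s" and u y :: "nat \<Rightarrow> real^'i"
    show "(\<forall>t. x (Suc t) = A *v x t + B *v u t \<and> y t = C *v x t + D *v u t) =
    (\<forall>t. x (Suc t) = (A - B ** ?Ti ** ?P ** C) *v x t + B ** ?Ti *v (?Q *v u t + ?P *v y t) \<and>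
         ?P *v u t + ?Q *v y t =
         (?Q ** C - (?P + ?Q ** D) ** ?Ti ** ?P ** C) *v x t + (?P + ?Q ** D) ** ?Ti *v (?Q *v u t + ?P *v y t))"
      using pointwise[OF invT, of "x (Suc _)" A "x _" B "u _" "y _" C] by blast
  qed
  thus ?thesis by blast
qed

lemma rev_ids:
  fixes A A' :: "real^'s::finite^'s" and B B' :: "real^'i::finite^'s" and C C' :: "real^'s^'i" and D D' :: "real^'i^'i" and K :: "'i set"
  assumes c: "is_conjugation K (A, B, C, D) (A', B', C', D')"
  defines "P \<equiv> Pm K :: real^'i^'i" and "Q \<equiv> Qm K :: real^'i^'i"
  shows "A' = A + B ** P ** C'" "B' = B ** Q + B ** P ** D'"
        "Q ** C' = C + D ** P ** C'" "P + Q ** D' = D ** Q + D ** P ** D'"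
proof -
  note simps = matrix_vector_mult_add_rdistrib matrix_vector_right_distrib
     matrix_vector_mult_diff_distrib matrix_vector_mult_diff_rdistrib
     matrix_vector_mul_assoc[symmetric]
  have pw: "A' *v \<xi> + B' *v v = A *v \<xi> + B *v (Q *v v + P *v (C' *v \<xi> + D' *v v)) \<and>
     P *v v + Q *v (C' *v \<xi> + D' *v v) = C *v \<xi> + D *v (Q *v v + P *v (C' *v \<xi> + D' *v v))" for \<xi> v
  proof -
    define x where "x = rec_nat \<xi> (\<lambda>_ xt. A' *v xt + B' *v v)"
    define u' where "u' = (\<lambda>_::nat. v)"
    define y' where "y' = (\<lambda>t. C' *v x t + D' *v v)"
    define u where "u = (\<lambda>t. conj_in K (u' t) (y' t))"
    define y where "y = (\<lambda>t. conj_out K (u' t) (y' t))"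
    have "lti_traj (A', B', C', D') x u' y'"
      by (simp add: lti_traj_def x_def u'_def y'_def)
    hence "lti_traj (A', B', C', D') x (\<lambda>t. conj_in K (u t) (y t)) (\<lambda>t. conj_out K (u t) (y t))"
      by (simp add: u_def y_def conj_invol)
    hence "lti_traj (A, B, C, D) x u y" using c unfolding is_conjugation_def by blast
    hence "x (Suc 0) = A *v x 0 + B *v u 0 \<and> y 0 = C *v x 0 + D *v u 0"
      unfolding lti_traj_def by simp
    thus ?thesis by (simp add: x_def u_def y_def u'_def y'_def conj_in_PQ conj_out_PQ P_def Q_def)
  qed
  have e1: "A' *v \<xi> + B' *v v = (A + B ** P ** C') *v \<xi> + (B ** Q + B ** P ** D') *v v" for \<xi> v
    using pw[of \<xi> v] by (simp add: simps algebra_simps)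
  have e2: "(P + Q ** D') *v v + (Q ** C') *v \<xi> = (D ** Q + D ** P ** D') *v v + (C + D ** P ** C') *v \<xi>" for \<xi> v
    using pw[of \<xi> v] by (simp add: simps algebra_simps)
  show "A' = A + B ** P ** C'" using e1[where v=0] by (simp add: matrix_eq)
  show "B' = B ** Q + B ** P ** D'" using e1[where \<xi>=0] by (simp add: matrix_eq)
  show "Q ** C' = C + D ** P ** C'" using e2[where v=0] by (simp add: matrix_eq)
  show "P + Q ** D' = D ** Q + D ** P ** D'" using e2[where \<xi>=0] by (simp add: matrix_eq)
qed


lemma matrix_add_rdistrib': "((B + C) ** A) = (B ** A) + (C ** A)"
  by (vector matrix_matrix_mult_def sum.distrib[symmetric] field_simps)
lemma matrix_diff_rdistrib': "((B - C) ** (A :: 'a::ring_1^_^_)) = (B ** A) - (C ** A)"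
  by (vector matrix_matrix_mult_def sum_subtractf[symmetric] field_simps)

lemma cmat_mult: "cmat (M ** N) = cmat M ** cmat N"
  by (simp add: cmat_def matrix_matrix_mult_def vec_eq_iff)
lemma cmat_add: "cmat (M + N) = cmat M + cmat N"
  by (simp add: cmat_def vec_eq_iff)
lemma cmat_Pm: "cmat (Pm K) = Pm K" by (simp add: cmat_def Pm_def vec_eq_iff)
lemma cmat_Qm: "cmat (Qm K) = Qm K" by (simp add: cmat_def Qm_def vec_eq_iff)

lemma key_alg:
  fixes A A' :: "'a::field^'s::finite^'s" and B B' :: "'a^'i::finite^'s" and C C' :: "'a^'s^'i"
    and D D' P Q :: "'a^'i^'i"
  assumes iK: "invertible (mat z - A)" and iK': "invertible (mat z - A')"
    and E1: "A' = A + B ** P ** C'" and E2: "B' = B ** Q + B ** P ** D'"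
    and E3: "Q ** C' = C + D ** P ** C'" and E4: "P + Q ** D' = D ** Q + D ** P ** D'"
  shows "(C ** matrix_inv (mat z - A) ** B + D) ** (Q + P ** (C' ** matrix_inv (mat z - A') ** B' + D'))
         = P + Q ** (C' ** matrix_inv (mat z - A') ** B' + D')"
proof -
  define K where "K = mat z - A"
  define K' where "K' = mat z - A'"
  define X where "X = matrix_inv K' ** B'"
  define G where "G = Q + P ** (C' ** X + D')"
  have H': "C' ** matrix_inv (mat z - A') ** B' + D' = C' ** X + D'"
    by (simp add: X_def K'_def matrix_mul_assoc)
  have KX': "K' ** X = B'"
    by (simp add: X_def matrix_mul_assoc inv_props(1)[OF iK'[folded K'_def]])
  have KK: "K = K' + B ** P ** C'" by (simp add: K_def K'_def E1 algebra_simps)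
  have KX: "K ** X = B ** G"
  proof -
    have "K ** X = B' + B ** P ** C' ** X" by (simp add: KK matrix_add_rdistrib' KX')
    also have "\<dots> = B ** G"
      by (simp add: E2 G_def matrix_add_ldistrib matrix_mul_assoc algebra_simps)
    finally show ?thesis .
  qed
  have PBG: "matrix_inv K ** B ** G = X"
  proof -
    have "matrix_inv K ** B ** G = matrix_inv K ** (K ** X)" by (simp add: KX matrix_mul_assoc)
    also have "\<dots> = X" by (simp add: matrix_mul_assoc inv_props(2)[OF iK[folded K_def]])
    finally show ?thesis .
  qed
  have "(C ** matrix_inv K ** B + D) ** G = C ** (matrix_inv K ** B ** G) + D ** G"
    by (simp add: matrix_add_rdistrib' matrix_mul_assoc)
  also have "\<dots> = C ** X + D ** G" by (simp add: PBG)
  also have "\<dots> = C ** X + D ** Q + D ** P ** C' ** X + D ** P ** D'"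
    by (simp add: G_def matrix_add_ldistrib matrix_mul_assoc add.assoc)
  also have "\<dots> = (C + D ** P ** C') ** X + (D ** Q + D ** P ** D')"
    by (simp add: matrix_add_rdistrib' algebra_simps)
  also have "\<dots> = P + Q ** (C' ** X + D')"
    by (simp add: E3[symmetric] E4[symmetric] matrix_add_ldistrib matrix_mul_assoc algebra_simps)
  finally show ?thesis unfolding H' by (simp add: K_def G_def)
qed


lemma transfer_rel:
  fixes R R' :: "('s::finite, 'i::finite) realization"
  assumes c: "is_conjugation K R R'" and r: "resolvent_ok R z" and r': "resolvent_ok R' z"
  shows "transfer R z ** (Qm K + Pm K ** transfer R' z) = Pm K + Qm K ** transfer R' z"
proof -
  obtain A B C D where R: "R = (A, B, C, D)" by (cases R) auto
  obtain A' B' C' D' where R': "R' = (A', B', C', D')" by (cases R') auto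
  note E = rev_ids[OF c[unfolded R R']]
  have E1: "cmat A' = cmat A + cmat B ** Pm K ** cmat C'"
    using arg_cong[OF E(1), of cmat] by (simp add: cmat_add cmat_mult cmat_Pm)
  have E2: "cmat B' = cmat B ** Qm K + cmat B ** Pm K ** cmat D'"
    using arg_cong[OF E(2), of cmat] by (simp add: cmat_add cmat_mult cmat_Pm cmat_Qm)
  have E3: "Qm K ** cmat C' = cmat C + cmat D ** Pm K ** cmat C'"
    using arg_cong[OF E(3), of cmat] by (simp add: cmat_add cmat_mult cmat_Pm cmat_Qm)
  have E4: "Pm K + Qm K ** cmat D' = cmat D ** Qm K + cmat D ** Pm K ** cmat D'"
    using arg_cong[OF E(4), of cmat] by (simp add: cmat_add cmat_mult cmat_Pm cmat_Qm)
  show ?thesis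
    using key_alg[OF _ _ E1 E2 E3 E4, of z] r r' unfolding R R' transfer_def resolvent_ok_def by simp
qed

lemma Pm_UNIV: "Pm UNIV = mat 1" by (simp add: Pm_def mat_def vec_eq_iff)
lemma Qm_UNIV: "Qm UNIV = 0" by (simp add: Qm_def vec_eq_iff)

lemma inv_single:
  fixes D :: "real^'i::finite^'i"
  assumes "D $ k $ k \<noteq> 0"
  shows "invertible (Qm {k} + Pm {k} ** D)"
proof -
  have "\<forall>x. (Qm {k} + Pm {k} ** D) *v x = 0 \<longrightarrow> x = 0"
  proof (intro allI impI)
    fix x :: "real^'i"
    assume h: "(Qm {k} + Pm {k} ** D) *v x = 0"
    hence h': "Qm {k} *v x + Pm {k} *v (D *v x) = 0"
      by (simp add: matrix_vector_mult_add_rdistrib matrix_vector_mul_assoc)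
    have xi: "x $ i = 0" if "i \<noteq> k" for i
      using arg_cong[OF h', of "\<lambda>v. v $ i"] that by (simp add: Qm_v Pm_v)
    have "(D *v x) $ k = 0" using arg_cong[OF h', of "\<lambda>v. v $ k"] by (simp add: Qm_v Pm_v)
    hence "(\<Sum>j\<in>UNIV. D $ k $ j * x $ j) = 0" by (simp add: matrix_vector_mult_def)
    moreover have "(\<Sum>j\<in>UNIV. D $ k $ j * x $ j) = (\<Sum>j\<in>UNIV. if j = k then D $ k $ k * x $ k else 0)"
      by (rule sum.cong) (auto simp: xi)
    ultimately have "x $ k = 0" using assms by simp
    thus "x = 0" using xi by (metis vec_eq_iff zero_index)
  qed
  thus ?thesis using matrix_left_invertible_ker invertible_left_inverse by blast
qed


lemma ite_mult: "(if P then 1 else 0) * (a::'a::comm_ring_1) = (if P then a else 0)" by simp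
lemma PN: "(Pm {k} ** N) $ l $ j = (if l = k then N$k$j else (0::'a::comm_ring_1))"
  unfolding matrix_matrix_mult_def Pm_def vec_lambda_beta ite_mult
  by (cases "l = k") (simp_all add: sum.delta)
lemma QN: "(Qm {k} ** N) $ l $ j = (if l = k then 0 else N$l$j :: 'a::comm_ring_1)"
  unfolding matrix_matrix_mult_def Qm_def vec_lambda_beta ite_mult
  by (cases "l = k") (simp_all add: sum.delta)
lemma entry_l: "(M ** (Qm {k} + Pm {k} ** N)) $ i $ j = (if j \<noteq> k then M$i$j else 0) + M$i$k * (N$k$j :: 'a::comm_ring_1)"
proof -
  have "(M ** (Qm {k} + Pm {k} ** N)) $ i $ j = (\<Sum>l\<in>UNIV. M$i$l * ((Qm {k} + Pm {k} ** N) $ l $ j))"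
    by (simp add: matrix_matrix_mult_def)
  also have "\<dots> = (\<Sum>l\<in>UNIV. M$i$l * ((if l = j \<and> l \<noteq> k then 1 else 0) + (if l = k then N$k$j else 0)))"
    by (simp add: PN Qm_def)
  also have "\<dots> = (\<Sum>l\<in>UNIV. (if l = j then (if j \<noteq> k then M$i$j else 0) else 0)) + (\<Sum>l\<in>UNIV. if l = k then M$i$k * N$k$j else 0)"
    unfolding sum.distrib[symmetric] by (rule sum.cong) auto
  finally show ?thesis by simp
qed
lemma entry_r: "(Pm {k} + Qm {k} ** N) $ i $ j = (if i = k \<and> j = k then 1 else 0) + (if i \<noteq> k then N$i$j else (0::'a::comm_ring_1))"
  by (simp add: QN Pm_def)

theorem corollary8p2:
  fixes R :: "('s::finite, 'i::finite) realization"
  shows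
   "(\<forall>k. Dmat R $ k $ k \<noteq> 0 \<longrightarrow>
       (\<exists>R'. is_conjugation {k} R R') \<and>
       (\<forall>R' z. is_conjugation {k} R R' \<longrightarrow> resolvent_ok R z \<longrightarrow> resolvent_ok R' z \<longrightarrow>
          (\<forall>i j. transfer R' z $ i $ j =
             (let h = transfer R z in
              if i = k \<and> j = k then 1 / h $ k $ k
              else if i = k \<and> j \<noteq> k then - h $ k $ j / h $ k $ k
              else if i \<noteq> k \<and> j = k then h $ i $ k / h $ k $ k
              else h $ i $ j - h $ i $ k * h $ k $ j / h $ k $ k)))) \<and>
    (invertible (Dmat R) \<longrightarrow>
       (\<exists>R'. is_conjugation UNIV R R') \<and>
       (\<forall>R' z. is_conjugation UNIV R R' \<longrightarrow> resolvent_ok R z \<longrightarrow> resolvent_ok R' z \<longrightarrow>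
          transfer R' z = matrix_inv (transfer R z)))"
proof (intro conjI allI impI)
  obtain A B C D where R: "R = (A, B, C, D)" by (cases R) auto
  fix k assume dk: "Dmat R $ k $ k \<noteq> 0"
  show "\<exists>R'. is_conjugation {k} R R'"
    unfolding R by (rule exists_conj, rule inv_single) (use dk R in \<open>simp add: Dmat_def\<close>)
  fix R' z i j
  assume c: "is_conjugation {k} R R'" and r: "resolvent_ok R z" and r': "resolvent_ok R' z"
  define h where "h = transfer R z"
  define h' where "h' = transfer R' z"
  have M: "h ** (Qm {k} + Pm {k} ** h') = Pm {k} + Qm {k} ** h'"
    unfolding h_def h'_def by (rule transfer_rel[OF c r r'])
  have eq: "(if j \<noteq> k then h$i$j else 0) + h$i$k * h'$k$j = (if i = k \<and> j = k then 1 else 0) + (if i \<noteq> k then h'$i$j else 0)" for i j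
    using arg_cong[OF M, of "\<lambda>X. X $ i $ j"] by (simp only: entry_l entry_r)
  have kk: "h$k$k * h'$k$k = 1" using eq[where i=k and j=k] by simp
  hence hk: "h$k$k \<noteq> 0" by auto
  have kk': "h'$k$k = 1 / h$k$k" using kk hk by (simp add: field_simps)
  show "h' $ i $ j = (let h = h in
              if i = k \<and> j = k then 1 / h $ k $ k
              else if i = k \<and> j \<noteq> k then - h $ k $ j / h $ k $ k
              else if i \<noteq> k \<and> j = k then h $ i $ k / h $ k $ k
              else h $ i $ j - h $ i $ k * h $ k $ j / h $ k $ k)"
  proof (cases "i = k"; cases "j = k")
    assume "i = k" "j = k" thus ?thesis using kk' by simp
  next
    assume a: "i = k" "j \<noteq> k"
    have "h$k$j + h$k$k * h'$k$j = 0" using eq[where i=k and j=j] a by simp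
    hence "h$k$k * h'$k$j = - h$k$j" by (metis add.commute add_eq_0_iff)
    hence "h'$k$j = - h$k$j / h$k$k" using hk by (metis nonzero_mult_div_cancel_left minus_divide_left)
    thus ?thesis using a by simp
  next
    assume a: "i \<noteq> k" "j = k"
    have "h$i$k * h'$k$k = h'$i$k" using eq[where i=i and j=k] a by simp
    thus ?thesis using a hk kk' by (simp add: field_simps)
  next
    assume a: "i \<noteq> k" "j \<noteq> k"
    have 1: "h$k$j + h$k$k * h'$k$j = 0" using eq[where i=k and j=j] a by simp
    hence "h$k$k * h'$k$j = - h$k$j" by (metis add.commute add_eq_0_iff)
    hence kj: "h'$k$j = - h$k$j / h$k$k" using hk by (metis nonzero_mult_div_cancel_left minus_divide_left)
    have "h$i$j + h$i$k * h'$k$j = h'$i$j" using eq[where i=i and j=j] a by simp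
    thus ?thesis using a kj by (simp add: field_simps)
  qed
next
  obtain A B C D where R: "R = (A, B, C, D)" by (cases R) auto
  assume iD: "invertible (Dmat R)"
  show "\<exists>R'. is_conjugation UNIV R R'"
    unfolding R by (rule exists_conj) (use iD R in \<open>simp add: Dmat_def Pm_UNIV Qm_UNIV\<close>)
  fix R' z
  assume c: "is_conjugation UNIV R R'" and r: "resolvent_ok R z" and r': "resolvent_ok R' z"
  have "transfer R z ** transfer R' z = mat 1"
    using transfer_rel[OF c r r'] by (simp add: Pm_UNIV Qm_UNIV)
  thus "transfer R' z = matrix_inv (transfer R z)" by (simp add: inv_unique)
qed
end
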